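(* Let $K$ be a field of characteristic zero. Suppose that for all $f,g\in K[X]$ with $\deg(f)=\deg(g)>1$ and all $x_0,y_0\in K$: if infinitely many points of $\mathcal{O}_f(x_0)\times\mathcal{O}_g(y_0)$ lie on the line $Y=X$, then $g^k=f^k$ for some positive integer $k$. Then for all $\alpha,\beta,x_0,y_0\in K$ with $\alpha\neq0$ and all $f,g\in K[X]$ with $\deg(f)=\deg(g)>1$: if infinitely many points of $\mathcal{O}_f(x_0)\times\mathcal{O}_g(y_0)$ lie on the line $Y=\alpha X+\beta$, then $g^k(\alpha X+\beta)=\alpha f^k(X)+\beta$ for some positive integer $k$.
   Context: $\mathcal{O}_f(x_0)=\{x_0,f(x_0),f(f(x_0)),\dots\}$ is the orbit of $x_0$ under $f$; $f^k$ denotes the $k$-th iterate of $f$ under composition. *)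

theory Defs
  imports "HOL-Computational_Algebra.Polynomial"
begin

definition poly_iter :: "'a::comm_semiring_1 poly \<Rightarrow> nat \<Rightarrow> 'a poly" where
  "poly_iter f k = ((\<lambda>p. pcompose f p) ^^ k) [:0, 1:]"

definition orbit :: "'a::comm_semiring_1 poly \<Rightarrow> 'a \<Rightarrow> 'a set" where
  "orbit f x0 = {((\<lambda>x. poly f x) ^^ n) x0 | n. True}"

end

theory Submission
  imports Defs
begin

lemma poly_iter_Suc: "poly (poly_iter f (Suc k)) x = poly f (poly (poly_iter f k) x)"
  by (simp add: poly_iter_def poly_pcompose)

lemma poly_iter_eval: "poly (poly_iter f k) x = ((\<lambda>x. poly f x) ^^ k) x"
  by (induction k) (auto simp: poly_iter_Suc, simp add: poly_iter_def)

theorem lemma5p2: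
  assumes diag: "\<forall>(f::'a::field_char_0 poly) g x0 y0.
      degree f = degree g \<and> degree f > 1 \<and>
      infinite {(x, y). x \<in> orbit f x0 \<and> y \<in> orbit g y0 \<and> y = x}
      \<longrightarrow> (\<exists>k>0. poly_iter g k = poly_iter f k)"
  shows "\<forall>(\<alpha>::'a) \<beta> x0 y0 (f::'a poly) g.
      \<alpha> \<noteq> 0 \<and> degree f = degree g \<and> degree f > 1 \<and>
      infinite {(x, y). x \<in> orbit f x0 \<and> y \<in> orbit g y0 \<and> y = \<alpha> * x + \<beta>}
      \<longrightarrow> (\<exists>k>0. pcompose (poly_iter g k) [:\<beta>, \<alpha>:]
                     = smult \<alpha> (poly_iter f k) + [:\<beta>:])"
proof (intro allI impI)
  fix \<alpha> \<beta> x0 y0 and f g :: "'a poly"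
  assume A: "\<alpha> \<noteq> 0 \<and> degree f = degree g \<and> degree f > 1 \<and>
      infinite {(x, y). x \<in> orbit f x0 \<and> y \<in> orbit g y0 \<and> y = \<alpha> * x + \<beta>}"
  hence a0: "\<alpha> \<noteq> 0" and dfg: "degree f = degree g" and d1: "degree f > 1"
    and inf: "infinite {(x, y). x \<in> orbit f x0 \<and> y \<in> orbit g y0 \<and> y = \<alpha> * x + \<beta>}"
    by auto
  define h where "h = pcompose [:- \<beta> / \<alpha>, 1 / \<alpha>:] (pcompose g [:\<beta>, \<alpha>:])"
  have evh: "poly h x = (poly g (\<alpha> * x + \<beta>) - \<beta>) / \<alpha>" for x
    using a0 by (simp add: h_def poly_pcompose field_simps)
  have dh: "degree h = degree g"
    using a0 by (simp add: h_def degree_pcompose)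
  define x0' where "x0' = (y0 - \<beta>) / \<alpha>"
  have orb: "((\<lambda>x. poly h x) ^^ n) x0' = (((\<lambda>x. poly g x) ^^ n) y0 - \<beta>) / \<alpha>" for n
  proof (induction n)
    case 0 then show ?case by (simp add: x0'_def)
  next
    case (Suc n) then show ?case using a0 by (simp add: evh field_simps)
  qed
  let ?S = "{(x, y). x \<in> orbit f x0 \<and> y \<in> orbit g y0 \<and> y = \<alpha> * x + \<beta>}"
  let ?T = "{(x, y). x \<in> orbit f x0 \<and> y \<in> orbit h x0' \<and> y = x}"
  define m where "m = (\<lambda>(x::'a, y::'a). (x, (y - \<beta>) / \<alpha>))"
  have sub: "m ` ?S \<subseteq> ?T"
  proof
    fix p assume "p \<in> m ` ?S"
    then obtain x y where xy: "x \<in> orbit f x0" "y \<in> orbit g y0" "y = \<alpha> * x + \<beta>" and p: "p = m (x, y)"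
      by auto
    from xy(2) obtain n where "y = ((\<lambda>x. poly g x) ^^ n) y0" by (auto simp: orbit_def)
    hence "(y - \<beta>) / \<alpha> \<in> orbit h x0'" by (auto simp: orbit_def orb)
    moreover have "(y - \<beta>) / \<alpha> = x" using xy(3) a0 by simp
    ultimately show "p \<in> ?T" using p xy(1) by (auto simp: m_def)
  qed
  have "inj_on m ?S" using a0 by (auto simp: inj_on_def m_def)
  hence "infinite (m ` ?S)" using inf finite_imageD by blast
  hence "infinite ?T" using sub finite_subset by blast
  then obtain k where k: "k > 0" "poly_iter h k = poly_iter f k"
    using diag[rule_format, of f h x0 x0'] dfg dh d1 by auto
  have ih: "poly (poly_iter h k) x = (poly (poly_iter g k) (\<alpha> * x + \<beta>) - \<beta>) / \<alpha>" for x
  proof (induction k arbitrary: x)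
    case 0 then show ?case using a0 by (simp add: poly_iter_def)
  next
    case (Suc k) then show ?case using a0 by (simp add: poly_iter_Suc evh field_simps)
  qed
  have "poly (pcompose (poly_iter g k) [:\<beta>, \<alpha>:]) x = poly (smult \<alpha> (poly_iter f k) + [:\<beta>:]) x" for x
    using ih[of x] k(2) a0 by (simp add: poly_pcompose field_simps)
  hence "pcompose (poly_iter g k) [:\<beta>, \<alpha>:] = smult \<alpha> (poly_iter f k) + [:\<beta>:]"
    by (simp add: poly_eq_poly_eq_iff[symmetric] fun_eq_iff)
  thus "\<exists>k>0. pcompose (poly_iter g k) [:\<beta>, \<alpha>:] = smult \<alpha> (poly_iter f k) + [:\<beta>:]"
    using k(1) by blast
qed

end
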